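(* Let $Q$ be a completely semisimple inverse semigroup satisfying the ascending chain condition on the $\leq_{\mathcal{J}}$-order of its $\mathcal{J}$-classes. Then every left I-order in $Q$ is straight.
   Context: For an element $a$ of an inverse semigroup $Q$, $a^{-1}$ is its unique inverse. A subsemigroup $S$ of $Q$ is a left I-order in $Q$ if every $q\in Q$ can be written $q=a^{-1}b$ with $a,b\in S$; it is straight if $a,b$ can always be chosen with $a\,\mathcal{R}\,b$ in $Q$. An inverse semigroup is completely semisimple if no two distinct idempotents $e>f$ (in the natural order) are $\mathcal{D}$-related (equivalently, every principal factor is completely simple or completely 0-simple). The ascending chain condition on the $\leq_{\mathcal{J}}$-order means there is no infinite strictly ascending chain $J_1<J_2<\cdots$ of $\mathcal{J}$-classes, where $J_a\leq J_b$ iff $Q^1aQ^1\subseteq Q^1bQ^1$. *)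

theory Defs
  imports Main
begin

text \<open>The inverse semigroup Q is the whole carrier of a type of class semigroup_mult.\<close>

definition inverse_semigroup :: "'a::semigroup_mult itself \<Rightarrow> bool" where
  "inverse_semigroup _ \<longleftrightarrow> (\<forall>a::'a. \<exists>!b. a * b * a = a \<and> b * a * b = b)"

definition sinv :: "'a::semigroup_mult \<Rightarrow> 'a" where
  "sinv a = (THE b. a * b * a = a \<and> b * a * b = b)"

definition idem :: "'a::semigroup_mult \<Rightarrow> bool" where
  "idem e \<longleftrightarrow> e * e = e"

definition nat_le :: "'a::semigroup_mult \<Rightarrow> 'a \<Rightarrow> bool" where
  "nat_le a b \<longleftrightarrow> (\<exists>e. idem e \<and> a = e * b)"

text \<open>Principal right/left/two-sided ideals in Q^1.\<close>
definition rideal1 :: "'a::semigroup_mult \<Rightarrow> 'a set" where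
  "rideal1 a = insert a {a * x | x. True}"
definition lideal1 :: "'a::semigroup_mult \<Rightarrow> 'a set" where
  "lideal1 a = insert a {x * a | x. True}"
definition ideal1 :: "'a::semigroup_mult \<Rightarrow> 'a set" where
  "ideal1 a = {a} \<union> {x * a | x. True} \<union> {a * y | y. True} \<union> {x * a * y | x y. True}"

definition greenR :: "'a::semigroup_mult \<Rightarrow> 'a \<Rightarrow> bool" where
  "greenR a b \<longleftrightarrow> rideal1 a = rideal1 b"
definition greenL :: "'a::semigroup_mult \<Rightarrow> 'a \<Rightarrow> bool" where
  "greenL a b \<longleftrightarrow> lideal1 a = lideal1 b"
definition greenD :: "'a::semigroup_mult \<Rightarrow> 'a \<Rightarrow> bool" where
  "greenD a b \<longleftrightarrow> (\<exists>c. greenR a c \<and> greenL c b)"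

definition J_le :: "'a::semigroup_mult \<Rightarrow> 'a \<Rightarrow> bool" where
  "J_le a b \<longleftrightarrow> ideal1 a \<subseteq> ideal1 b"
definition J_less :: "'a::semigroup_mult \<Rightarrow> 'a \<Rightarrow> bool" where
  "J_less a b \<longleftrightarrow> J_le a b \<and> \<not> J_le b a"

definition completely_semisimple :: "'a::semigroup_mult itself \<Rightarrow> bool" where
  "completely_semisimple _ \<longleftrightarrow>
     \<not> (\<exists>e f :: 'a. idem e \<and> idem f \<and> nat_le f e \<and> f \<noteq> e \<and> greenD e f)"

definition J_acc :: "'a::semigroup_mult itself \<Rightarrow> bool" where
  "J_acc _ \<longleftrightarrow> \<not> (\<exists>s :: nat \<Rightarrow> 'a. \<forall>n. J_less (s n) (s (Suc n)))"

definition subsemigroup :: "'a::semigroup_mult set \<Rightarrow> bool" where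
  "subsemigroup S \<longleftrightarrow> (\<forall>a\<in>S. \<forall>b\<in>S. a * b \<in> S)"

definition left_I_order :: "'a::semigroup_mult set \<Rightarrow> bool" where
  "left_I_order S \<longleftrightarrow> subsemigroup S \<and> (\<forall>q. \<exists>a\<in>S. \<exists>b\<in>S. q = sinv a * b)"

definition straight_left_I_order :: "'a::semigroup_mult set \<Rightarrow> bool" where
  "straight_left_I_order S \<longleftrightarrow> left_I_order S \<and>
     (\<forall>q. \<exists>a\<in>S. \<exists>b\<in>S. q = sinv a * b \<and> greenR a b)"

end

theory Submission
  imports Defs
begin

context
  assumes INV: "inverse_semigroup TYPE('a::semigroup_mult)"
begin

lemma ex1_inv: "\<exists>!b. (a::'a) * b * a = a \<and> b * a * b = b"
  using INV by (simp add: inverse_semigroup_def)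

lemma sinv_props: "(a::'a) * sinv a * a = a \<and> sinv a * a * sinv a = sinv a"
  unfolding sinv_def by (rule theI'[OF ex1_inv])

lemma sinv_unique: "(a::'a) * b * a = a \<Longrightarrow> b * a * b = b \<Longrightarrow> sinv a = b"
  unfolding sinv_def by (rule the1_equality[OF ex1_inv]) simp

lemma s1[simp]: "(a::'a) * (sinv a * a) = a"
  using sinv_props[of a] by (simp add: mult.assoc)
lemma s2[simp]: "sinv (a::'a) * (a * sinv a) = sinv a"
  using sinv_props[of a] by (simp add: mult.assoc)
lemma s1'[simp]: "(a::'a) * (sinv a * (a * x)) = a * x"
  by (metis s1 mult.assoc)
lemma s2'[simp]: "sinv (a::'a) * (a * (sinv a * x)) = sinv a * x"
  by (metis s2 mult.assoc)

lemma sinv_idem: "idem (e::'a) \<Longrightarrow> sinv e = e"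
  by (rule sinv_unique) (simp_all add: idem_def)

lemma idem_mult: assumes "idem (e::'a)" "idem f" shows "idem (e*f)"
proof -
  have ee: "e * e = e" and ff: "f * f = f" using assms by (simp_all add: idem_def)
  have ee': "e * (e * z) = e * z" for z using ee by (metis mult.assoc)
  have ff': "f * (f * z) = f * z" for z using ff by (metis mult.assoc)
  define x where "x = sinv (e*f)"
  have x1: "e * (f * (x * (e * f))) = e * f" using sinv_props[of "e*f"] unfolding x_def by (simp add: mult.assoc)
  have x2: "x * (e * (f * x)) = x" using sinv_props[of "e*f"] unfolding x_def by (simp add: mult.assoc)
  have x2': "x * (e * (f * (x * z))) = x * z" for z using x2 by (metis mult.assoc)
  have "sinv (e*f) = f * x * e"
  proof (rule sinv_unique)
    show "e * f * (f * x * e) * (e * f) = e * f" by (simp add: mult.assoc ee' ff' x1)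
    show "f * x * e * (e * f) * (f * x * e) = f * x * e" by (simp add: mult.assoc ee' ff' x2')
  qed
  hence xe: "x = f * x * e" unfolding x_def .
  have xx: "x * x = x"
  proof -
    have "x * x = f * (x * (e * (f * x))) * e" using xe by (metis mult.assoc)
    also have "\<dots> = x" using x2 xe by simp
    finally show ?thesis .
  qed
  have "sinv x = e * f"
    by (rule sinv_unique) (simp_all add: mult.assoc x1 x2)
  moreover have "sinv x = x" by (rule sinv_idem) (simp add: idem_def xx)
  ultimately show ?thesis using xx by (simp add: idem_def)
qed

lemma idem_comm: assumes "idem (e::'a)" "idem f" shows "e*f = f*e"
proof -
  have ee: "e * e = e" and ff: "f * f = f" using assms by (simp_all add: idem_def)
  have ee': "e * (e * z) = e * z" for z using ee by (metis mult.assoc)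
  have ff': "f * (f * z) = f * z" for z using ff by (metis mult.assoc)
  have ef: "e * (f * (e * f)) = e * f" using idem_mult[OF assms] by (simp add: idem_def mult.assoc)
  have fe: "f * (e * (f * e)) = f * e" using idem_mult[OF assms(2,1)] by (simp add: idem_def mult.assoc)
  have "sinv (e*f) = f * e"
    by (rule sinv_unique) (simp_all add: mult.assoc ee' ff' ef fe)
  moreover have "sinv (e*f) = e * f" by (rule sinv_idem[OF idem_mult[OF assms]])
  ultimately show ?thesis by simp
qed

lemma idem_r[simp]: "idem ((a::'a) * sinv a)"
  unfolding idem_def by (simp add: mult.assoc)
lemma idem_l[simp]: "idem (sinv (a::'a) * a)"
  unfolding idem_def by (simp add: mult.assoc)

lemma sinv_sinv[simp]: "sinv (sinv (a::'a)) = a"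
  by (rule sinv_unique) (simp_all add: mult.assoc)

lemma sinv_mult: "sinv ((a::'a) * b) = sinv b * sinv a"
proof (rule sinv_unique)
  have c: "b * sinv b * (sinv a * a) = sinv a * a * (b * sinv b)"
    by (rule idem_comm) simp_all
  have c': "b * (sinv b * (sinv a * (a * z))) = sinv a * (a * (b * (sinv b * z)))" for z
    using c by (metis mult.assoc)
  show "a * b * (sinv b * sinv a) * (a * b) = a * b" by (simp add: mult.assoc c')
  have c2: "sinv a * a * (b * sinv b) = b * sinv b * (sinv a * a)"
    by (rule idem_comm) simp_all
  have c2': "sinv a * (a * (b * (sinv b * z))) = b * (sinv b * (sinv a * (a * z)))" for z
    using c2 by (metis mult.assoc)
  show "sinv b * sinv a * (a * b) * (sinv b * sinv a) = sinv b * sinv a" by (simp add: mult.assoc c2')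
qed

lemma rideal_eq: "(a::'a) = b * x1 \<Longrightarrow> b = a * x2 \<Longrightarrow> rideal1 a = rideal1 b"
  unfolding rideal1_def by (auto simp: mult.assoc) (metis mult.assoc)+

lemma lideal_eq: "(a::'a) = x1 * b \<Longrightarrow> b = x2 * a \<Longrightarrow> lideal1 a = lideal1 b"
  unfolding lideal1_def by (auto simp: mult.assoc[symmetric]) (metis mult.assoc)+

lemma ideal1_repr: assumes "idem (e::'a)" "z \<in> ideal1 e" shows "\<exists>x y. z = x * e * y"
proof -
  have ee: "e * e = e" using assms by (simp add: idem_def)
  have "e = e * e * e" "\<And>x. x * e = x * e * e" "\<And>y. e * y = e * e * y"
    using ee by (simp_all add: mult.assoc)
  thus ?thesis using assms(2) unfolding ideal1_def by blast
qed

lemma J_le_intro: "(e::'a) = p * g * r \<Longrightarrow> J_le e g"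
  unfolding J_le_def ideal1_def by (auto simp: mult.assoc) (metis mult.assoc)+

lemma CS: assumes CSS: "completely_semisimple TYPE('a)" and f: "idem (f::'a)" and g: "idem g"
  and fg: "f * g = f" and gx: "g = x * f * y" shows "f = g"
proof -
  have ff: "f * f = f" and gg: "g * g = g" using f g by (simp_all add: idem_def)
  define u where "u = g * x * f"
  define v where "v = f * y * g"
  have uv: "u * v = g"
  proof -
    have "u * v = g * x * (f * f) * y * g" by (simp add: u_def v_def mult.assoc)
    also have "\<dots> = g * g * g" using ff gx by (simp add: mult.assoc)
    finally show ?thesis using gg by simp
  qed
  have gu: "g * u = u" unfolding u_def using gg by (metis mult.assoc)
  have uf: "u * f = u" unfolding u_def using ff by (metis mult.assoc)
  define p where "p = u * sinv u"
  have gp: "g * p = p" unfolding p_def using gu by (metis mult.assoc)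
  have pg: "p * g = g" unfolding p_def using uv by (metis mult.assoc s1')
  have p: "p = g" using gp pg idem_comm[OF g, of p] unfolding p_def by simp
  define h where "h = sinv u * u"
  have hf: "h * f = h" unfolding h_def using uf by (metis mult.assoc)
  have hg: "h * g = h" using hf fg by (metis mult.assoc)
  have "greenR g u" unfolding greenR_def
    by (rule rideal_eq[of g u "sinv u" "u"]) (use p p_def gu in auto)
  moreover have "greenL u h" unfolding greenL_def
    by (rule lideal_eq[of u u h "sinv u"]) (simp_all add: h_def mult.assoc)
  ultimately have "greenD g h" unfolding greenD_def by blast
  moreover have "idem h" unfolding h_def by simp
  moreover have "nat_le h g" unfolding nat_le_def using \<open>idem h\<close> hg by metis
  ultimately have "h = g" using CSS g unfolding completely_semisimple_def by blast
  hence "g * f = g" using hf by simp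
  thus ?thesis using fg idem_comm[OF f g] by simp
qed

lemma wfJ: assumes "J_acc TYPE('a)" shows "wf {(y::'a, x). J_less x y}"
  using assms unfolding J_acc_def wf_iff_no_infinite_down_chain by auto

lemma Pidem: assumes CSS: "completely_semisimple TYPE('a)" and ACC: "J_acc TYPE('a)"
  and LI: "left_I_order (S::'a set)"
  shows "idem e \<Longrightarrow> \<exists>d\<in>S. sinv d * d = e"
proof (induction e rule: wf_induct_rule[OF wfJ[OF ACC]])
  case (1 e)
  have ee: "e * e = e" using 1(2) by (simp add: idem_def)
  have sub: "subsemigroup S" using LI by (simp add: left_I_order_def)
  obtain a b where a: "a \<in> S" and b: "b \<in> S" and eab: "e = sinv a * b"
    using LI unfolding left_I_order_def by blast
  have eie: "e = e * sinv e" using sinv_idem[OF 1(2)] ee by simp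
  also have "\<dots> = sinv a * (b * sinv b) * a" using eab by (simp add: sinv_mult mult.assoc)
  finally have e2: "e = sinv a * (b * sinv b) * a" .
  show ?case
  proof (cases "J_less e (b * sinv b)")
    case True
    then obtain s where s: "s \<in> S" "sinv s * s = b * sinv b" using 1(1)[of "b * sinv b"] by auto
    have sa: "s * a \<in> S" using sub s a unfolding subsemigroup_def by blast
    have s2: "sinv s * (s * z) = b * (sinv b * z)" for z using s(2) by (metis mult.assoc)
    have "sinv (s * a) * (s * a) = e"
      using e2 s2 by (simp add: sinv_mult mult.assoc)
    with sa show ?thesis by blast
  next
    case False
    have "e = sinv a * (b * sinv b) * b" using eab by (simp add: mult.assoc)
    hence "J_le e (b * sinv b)" by (rule J_le_intro)
    with False have "J_le (b * sinv b) e" unfolding J_less_def by blast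
    hence "b * sinv b \<in> ideal1 e" unfolding J_le_def ideal1_def by blast
    then obtain x y where xy: "b * sinv b = x * e * y" using ideal1_repr 1(2) by blast
    have hx: "sinv b * b = (sinv b * x) * e * (y * b)"
    proof -
      have "sinv b * b = sinv b * (b * sinv b) * b" by (simp add: mult.assoc)
      thus ?thesis using xy by (simp add: mult.assoc)
    qed
    have eh: "e * (sinv b * b) = e" using eab by (simp add: mult.assoc)
    have "e = sinv b * b" by (rule CS[OF CSS 1(2) idem_l eh hx])
    thus ?thesis using b by blast
  qed
qed

end

theorem theorem2p4:
  fixes S :: "'a::semigroup_mult set"
  assumes "inverse_semigroup TYPE('a)"
    and "completely_semisimple TYPE('a)"
    and "J_acc TYPE('a)"
    and "left_I_order S"
  shows "straight_left_I_order S"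
proof -
  have sub: "subsemigroup S" using assms(4) by (simp add: left_I_order_def)
  have "\<exists>c\<in>S. \<exists>d\<in>S. q = sinv c * d \<and> greenR c d" for q
  proof -
    obtain a b where a: "a \<in> S" and b: "b \<in> S" and qab: "q = sinv a * b"
      using assms(4) unfolding left_I_order_def by blast
    define f where "f = a * sinv a * (b * sinv b)"
    have fi: "idem f" unfolding f_def by (rule idem_mult[OF assms(1)]) (simp_all add: assms(1))
    obtain s where s: "s \<in> S" "sinv s * s = f" using Pidem[OF assms(1-4) fi] by blast
    have s2: "sinv s * (s * z) = a * (sinv a * (b * (sinv b * z)))" for z
      using s(2) unfolding f_def by (metis mult.assoc)
    define c where "c = s * a"
    define d where "d = s * b"
    have cS: "c \<in> S" and dS: "d \<in> S" using sub s a b unfolding subsemigroup_def c_def d_def by blast+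
    have q: "q = sinv c * d" unfolding c_def d_def qab
      by (simp add: sinv_mult[OF assms(1)] mult.assoc s2 assms(1))
    have sf: "s * f = s" using s(2) by (metis mult.assoc s1[OF assms(1)])
    have comm: "a * sinv a * (b * sinv b) = b * sinv b * (a * sinv a)"
      by (rule idem_comm[OF assms(1)]) (simp_all add: assms(1))
    have fa: "f * (a * sinv a) = f" unfolding f_def using comm idem_r[OF assms(1), of a]
      by (simp add: idem_def mult.assoc)
    have fb: "f * (b * sinv b) = f" unfolding f_def using idem_r[OF assms(1), of b]
      by (simp add: idem_def mult.assoc)
    have cc: "c * sinv c = s * sinv s"
    proof -
      have "c * sinv c = s * f * (a * sinv a) * sinv s" unfolding c_def
        using sf by (simp add: sinv_mult[OF assms(1)] mult.assoc)
      also have "\<dots> = s * sinv s" using fa sf by (metis mult.assoc)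
      finally show ?thesis .
    qed
    have dd: "d * sinv d = s * sinv s"
    proof -
      have "d * sinv d = s * f * (b * sinv b) * sinv s" unfolding d_def
        using sf by (simp add: sinv_mult[OF assms(1)] mult.assoc)
      also have "\<dots> = s * sinv s" using fb sf by (metis mult.assoc)
      finally show ?thesis .
    qed
    have "greenR c d" unfolding greenR_def
    proof (rule rideal_eq[OF assms(1), of c d "sinv d * c" "sinv c * d"])
      show "c = d * (sinv d * c)" using cc dd s1[OF assms(1), of c] by (metis mult.assoc)
      show "d = c * (sinv c * d)" using cc dd s1[OF assms(1), of d] by (metis mult.assoc)
    qed
    thus ?thesis using cS dS q by blast
  qed
  thus ?thesis using assms(4) unfolding straight_left_I_order_def by blast
qed

end
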